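(* The three-qubit CCZ gate $\mathrm{diag}(1,1,1,1,1,1,1,-1)$ can be emulated, without ancillae, by a three-qutrit circuit consisting of qutrit Clifford gates and $R$ gates with $R$-count $3$ (exactly three $R$ gates).
   Context: A qutrit is $\mathbb{C}^3$ with basis $\ket{0},\ket{1},\ket{2}$; $\omega=e^{2\pi i/3}$. Qutrit Clifford gates are those generated (up to global phase) by $S=\mathrm{diag}(1,1,\omega)$, $H=\frac{1}{\sqrt3}\begin{pmatrix}1&1&1\\1&\omega&\bar\omega\\1&\bar\omega&\omega\end{pmatrix}$ and $\mathrm{CX}:\ket{i,j}\mapsto\ket{i,(i+j)\bmod3}$. The qutrit reflection gate is $R=\mathrm{diag}(1,1,-1)$. A qutrit unitary $V$ on $n$ qutrits emulates an $n$-qubit unitary $U$ if, identifying qubit basis states $\ket{x}$, $x\in\{0,1\}^n$, with the equally labelled qutrit basis states, $V\ket{x}=U\ket{x}$ for all $x\in\{0,1\}^n$. *)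

theory Defs
  imports Complex_Main
begin

text \<open>Operators on three qutrits are
  represented by their matrix entries, indexed by basis states: A y x = <y|A|x>.\<close>

type_synonym op3 = "nat list \<Rightarrow> nat list \<Rightarrow> complex"

definition qutrit_basis3 :: "nat list set" where
  "qutrit_basis3 = {x. length x = 3 \<and> set x \<subseteq> {0,1,2}}"

definition qubit_basis3 :: "nat list set" where
  "qubit_basis3 = {x. length x = 3 \<and> set x \<subseteq> {0,1}}"

definition omega :: complex where
  "omega = cis (2 * pi / 3)"

definition S1 :: "nat \<Rightarrow> nat \<Rightarrow> complex" where
  "S1 i j = (if i = j then (if i = 2 then omega else 1) else 0)"

definition H1 :: "nat \<Rightarrow> nat \<Rightarrow> complex" where
  "H1 i j = omega ^ (i * j) / complex_of_real (sqrt 3)"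

definition R1 :: "nat \<Rightarrow> nat \<Rightarrow> complex" where
  "R1 i j = (if i = j then (if i = 2 then -1 else 1) else 0)"

definition on_qutrit :: "nat \<Rightarrow> (nat \<Rightarrow> nat \<Rightarrow> complex) \<Rightarrow> op3" where
  "on_qutrit k u = (\<lambda>y x. if (\<forall>j<3. j \<noteq> k \<longrightarrow> y ! j = x ! j) then u (y ! k) (x ! k) else 0)"

definition CX3 :: "nat \<Rightarrow> nat \<Rightarrow> op3" where
  "CX3 c t = (\<lambda>y x. if y = x[t := (x ! c + x ! t) mod 3] then 1 else 0)"

definition phase3 :: "complex \<Rightarrow> op3" where
  "phase3 z = (\<lambda>y x. if y = x then z else 0)"

definition id3 :: op3 where
  "id3 = (\<lambda>y x. if y = x then 1 else 0)"

definition mult3 :: "op3 \<Rightarrow> op3 \<Rightarrow> op3" where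
  "mult3 A B = (\<lambda>y x. \<Sum>z\<in>qutrit_basis3. A y z * B z x)"

text \<open>Gates: Clifford generators S, H on a qutrit, CX on an ordered pair of distinct
  qutrits, a global phase (Clifford gates are taken up to global phase), and the
  reflection gate R on a qutrit.\<close>
datatype gate = GS nat | GH nat | GCX nat nat | GPhase complex | GR nat

fun gate_ok :: "gate \<Rightarrow> bool" where
  "gate_ok (GS k) = (k < 3)"
| "gate_ok (GH k) = (k < 3)"
| "gate_ok (GCX c t) = (c < 3 \<and> t < 3 \<and> c \<noteq> t)"
| "gate_ok (GPhase z) = (cmod z = 1)"
| "gate_ok (GR k) = (k < 3)"

fun gate_op :: "gate \<Rightarrow> op3" where
  "gate_op (GS k) = on_qutrit k S1"
| "gate_op (GH k) = on_qutrit k H1"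
| "gate_op (GCX c t) = CX3 c t"
| "gate_op (GPhase z) = phase3 z"
| "gate_op (GR k) = on_qutrit k R1"

fun is_R :: "gate \<Rightarrow> bool" where
  "is_R (GR _) = True"
| "is_R _ = False"

text \<open>A circuit is a list of gates applied left to right (first gate acts first).\<close>
fun circuit_op :: "gate list \<Rightarrow> op3" where
  "circuit_op [] = id3"
| "circuit_op (g # gs) = mult3 (circuit_op gs) (gate_op g)"

definition R_count :: "gate list \<Rightarrow> nat" where
  "R_count gs = length (filter is_R gs)"

definition emulates3 :: "op3 \<Rightarrow> op3 \<Rightarrow> bool" where
  "emulates3 V U = (\<forall>x\<in>qubit_basis3. \<forall>y\<in>qutrit_basis3.
      V y x = (if y \<in> qubit_basis3 then U y x else 0))"

definition CCZ :: op3 where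
  "CCZ = (\<lambda>y x. if y = x then (if x = [1,1,1] then -1 else 1) else 0)"

end

theory Submission
  imports Defs
begin

lemma fin_basis: "finite qutrit_basis3"
  by (rule finite_subset[OF _ finite_lists_length_eq[of "{0::nat,1,2}" 3]])
     (auto simp: qutrit_basis3_def)

lemma mult3_mono:
  assumes "fx \<in> qutrit_basis3" "\<forall>z\<in>qutrit_basis3. A z x = (if z = fx then a else 0)"
  shows "mult3 B A y x = B y fx * a"
proof -
  have "mult3 B A y x = (\<Sum>z\<in>qutrit_basis3. (if z = fx then B y z * a else 0))"
    unfolding mult3_def using assms(2) by (intro sum.cong) auto
  also have "\<dots> = B y fx * a" using assms(1) fin_basis by (simp add: sum.delta')
  finally show ?thesis .
qed

lemma basis_upd:
  assumes "x \<in> qutrit_basis3" "(v::nat) < 3"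
  shows "x[t := v] \<in> qutrit_basis3"
proof -
  have "set (x[t := v]) \<subseteq> insert v (set x)" by (rule set_update_subset_insert)
  moreover have "v \<in> {0,1,2}" using assms(2) by auto
  ultimately show ?thesis using assms(1) unfolding qutrit_basis3_def by auto
qed

lemma CX_step:
  assumes "x \<in> qutrit_basis3"
  shows "circuit_op (GCX c t # gs) y x = circuit_op gs y (x[t := (x!c + x!t) mod 3])"
proof -
  have "mult3 (circuit_op gs) (CX3 c t) y x = circuit_op gs y (x[t := (x!c + x!t) mod 3]) * 1"
    by (rule mult3_mono) (auto simp: CX3_def intro: basis_upd[OF assms])
  then show ?thesis by simp
qed

lemma R_step:
  assumes "x \<in> qutrit_basis3" "k < 3"
  shows "circuit_op (GR k # gs) y x = circuit_op gs y x * R1 (x!k) (x!k)"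
proof -
  have "mult3 (circuit_op gs) (on_qutrit k R1) y x = circuit_op gs y x * R1 (x!k) (x!k)"
  proof (rule mult3_mono[OF assms(1)], intro ballI)
    fix z assume z: "z \<in> qutrit_basis3"
    show "on_qutrit k R1 z x = (if z = x then R1 (x ! k) (x ! k) else 0)"
    proof (cases "z = x")
      case False
      show ?thesis
      proof (cases "\<forall>j<3. j \<noteq> k \<longrightarrow> z ! j = x ! j")
        case True
        have "z ! k \<noteq> x ! k"
        proof
          assume "z ! k = x ! k"
          with True have "\<forall>j<3. z ! j = x ! j" by auto
          then have "z = x" using z assms(1) unfolding qutrit_basis3_def
            by (auto intro: nth_equalityI)
          with False show False by simp
        qed
        then show ?thesis using True False by (simp add: on_qutrit_def R1_def)
      next
        case f2: False
        then show ?thesis using False unfolding on_qutrit_def by auto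
      qed
    qed (simp add: on_qutrit_def)
  qed
  then show ?thesis by simp
qed

definition blk :: "nat \<Rightarrow> nat \<Rightarrow> nat \<Rightarrow> gate list" where
  "blk t a b = [GCX a t, GCX a t, GCX b t, GCX b t, GR t, GCX a t, GCX b t]"

definition circ :: "gate list" where
  "circ = blk 0 1 2 @ blk 1 0 2 @ blk 2 0 1"

lemma circ_col:
  assumes "x \<in> qubit_basis3"
  shows "circuit_op circ y x = (if y = x then (if x = [1,1,1] then -1 else 1) else 0)"
proof -
  have l: "length x = 3" and s: "set x \<subseteq> {0,1}" using assms unfolding qubit_basis3_def by auto
  have xe: "x = [x!0, x!1, x!2]" using l by (intro nth_equalityI) (auto simp: less_Suc_eq numeral_2_eq_2 numeral_3_eq_3)
  obtain a b c where x: "x = [a,b,c]" "a \<in> {0,1}" "b \<in> {0,1}" "c \<in> {0,1}"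
    using xe s by (metis insert_subset list.simps(15))
  show ?thesis using x
    by (auto simp del: circuit_op.simps(2) simp: circ_def blk_def CX_step R_step qutrit_basis3_def R1_def id3_def)
qed

theorem mainTheorem6:
  shows "\<exists>gs. (\<forall>g\<in>set gs. gate_ok g) \<and> R_count gs = 3 \<and> emulates3 (circuit_op gs) CCZ"
proof (intro exI conjI)
  show "\<forall>g\<in>set circ. gate_ok g" by (simp add: circ_def blk_def)
  show "R_count circ = 3" by (simp add: circ_def blk_def R_count_def)
  show "emulates3 (circuit_op circ) CCZ"
    unfolding emulates3_def
    by (auto simp: circ_col CCZ_def)
qed

end
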